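(* Let $(k,\nu)$ be a valued field with value group contained in $\mathbb{Z}$, let $V$ be a $k$-vector space of finite dimension $r$ with a value function $\operatorname{val}\colon V\to\mathbb{Z}\cup\{\infty\}$, and let $x\in k$ with $\nu(x)=1$. Consider the following procedure, applied to a $k$-basis $B_1,\dots,B_r$ of $V$: for $d=1,\dots,r$ in turn, first replace $B_d$ by $x^{-\operatorname{val}(B_d)}B_d$; then, as long as there exist $\alpha_1,\dots,\alpha_{d-1}\in k$ with $\operatorname{val}(\alpha_1B_1+\cdots+\alpha_{d-1}B_{d-1}+B_d)>0$, choose such $\alpha_1,\dots,\alpha_{d-1}$ and replace $B_d$ by $x^{-1}(\alpha_1B_1+\cdots+\alpha_{d-1}B_{d-1}+B_d)$. Finally return $B_1,\dots,B_r$. Then the procedure is correct: whenever it terminates, the returned elements $B_1,\dots,B_r$ form a $k$-basis of $V$ which is also an $\mathcal{O}_{(k,\nu)}$-module basis of the module $\mathcal{O}_{(V,\operatorname{val})}$ of integral elements of $V$ (i.e. a local integral basis of $V$ with respect to $\operatorname{val}$).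
   Context: A valuation on a field $k$ (of characteristic zero) with values in $\mathbb{Z}\cup\{\infty\}$ is a map $\nu$ with $\nu(a)=\infty\iff a=0$, $\nu(ab)=\nu(a)+\nu(b)$, $\nu(a+b)\ge\min\{\nu(a),\nu(b)\}$; $\mathcal{O}_{(k,\nu)}=\{a\in k:\nu(a)\ge0\}$. A value function on a $k$-vector space $V$ is a map $\operatorname{val}\colon V\to\mathbb{Z}\cup\{\infty\}$ with $\operatorname{val}(v)=\infty\iff v=0$, $\operatorname{val}(av)=\nu(a)+\operatorname{val}(v)$ for $a\in k$, and $\operatorname{val}(v+w)\ge\min\{\operatorname{val}(v),\operatorname{val}(w)\}$. An element $v$ is integral if $\operatorname{val}(v)\ge0$, and $\mathcal{O}_{(V,\operatorname{val})}$ denotes the set of integral elements. *)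

theory Defs
  imports Complex_Main "HOL-Library.Extended"
begin

text \<open>Values in Z \<union> {\<infinity>} are modelled by int extended, with Pinf = \<infinity>; Minf is excluded.\<close>

definition valuation :: "('k::field_char_0 \<Rightarrow> int extended) \<Rightarrow> bool" where
  "valuation \<nu> \<longleftrightarrow>
     (\<forall>a. \<nu> a \<noteq> Minf) \<and> (\<forall>a. \<nu> a = Pinf \<longleftrightarrow> a = 0) \<and>
     (\<forall>a b. \<nu> (a * b) = \<nu> a + \<nu> b) \<and>
     (\<forall>a b. \<nu> (a + b) \<ge> min (\<nu> a) (\<nu> b))"

definition value_function ::
  "('k::field_char_0 \<Rightarrow> 'v::ab_group_add \<Rightarrow> 'v) \<Rightarrow> ('k \<Rightarrow> int extended) \<Rightarrow> ('v \<Rightarrow> int extended) \<Rightarrow> bool" where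
  "value_function scale \<nu> val \<longleftrightarrow>
     (\<forall>v. val v \<noteq> Minf) \<and> (\<forall>v. val v = Pinf \<longleftrightarrow> v = 0) \<and>
     (\<forall>a v. val (scale a v) = \<nu> a + val v) \<and>
     (\<forall>v w. val (v + w) \<ge> min (val v) (val w))"

definition lincomb :: "('k \<Rightarrow> 'v::comm_monoid_add \<Rightarrow> 'v) \<Rightarrow> (nat \<Rightarrow> 'k) \<Rightarrow> 'v list \<Rightarrow> nat \<Rightarrow> 'v" where
  "lincomb scale a B d = (\<Sum>i<d. scale (a i) (B ! i))"

definition is_k_basis :: "('k::field \<Rightarrow> 'v::ab_group_add \<Rightarrow> 'v) \<Rightarrow> 'v list \<Rightarrow> bool" where
  "is_k_basis scale B \<longleftrightarrow>
     (\<forall>a. lincomb scale a B (length B) = 0 \<longrightarrow> (\<forall>i<length B. a i = 0)) \<and>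
     (\<forall>v. \<exists>a. v = lincomb scale a B (length B))"

definition local_integral_basis ::
  "('k::field \<Rightarrow> 'v::ab_group_add \<Rightarrow> 'v) \<Rightarrow> ('k \<Rightarrow> int extended) \<Rightarrow> ('v \<Rightarrow> int extended) \<Rightarrow> 'v list \<Rightarrow> bool" where
  "local_integral_basis scale \<nu> val B \<longleftrightarrow>
     (\<forall>i<length B. val (B ! i) \<ge> 0) \<and>
     (\<forall>v. val v \<ge> 0 \<longrightarrow> (\<exists>a. (\<forall>i<length B. \<nu> (a i) \<ge> 0) \<and> v = lincomb scale a B (length B))) \<and>
     (\<forall>a. (\<forall>i<length B. \<nu> (a i) \<ge> 0) \<and> lincomb scale a B (length B) = 0 \<longrightarrow> (\<forall>i<length B. a i = 0))"

definition normalize :: "('k::field \<Rightarrow> 'v \<Rightarrow> 'v) \<Rightarrow> ('v \<Rightarrow> int extended) \<Rightarrow> 'k \<Rightarrow> 'v \<Rightarrow> 'v" where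
  "normalize scale val x v = (case val v of Fin n \<Rightarrow> scale (x powi (- n)) v | _ \<Rightarrow> v)"

text \<open>Inner loop at (0-based) position d; only terminating runs are derivable.
  reduce_loop scale val x d B B' : starting from B, the loop may end with B'.\<close>
inductive reduce_loop ::
  "('k::field \<Rightarrow> 'v::ab_group_add \<Rightarrow> 'v) \<Rightarrow> ('v \<Rightarrow> int extended) \<Rightarrow> 'k \<Rightarrow> nat \<Rightarrow> 'v list \<Rightarrow> 'v list \<Rightarrow> bool"
  for scale val x where
  stop: "\<not> (\<exists>\<alpha>. val (lincomb scale \<alpha> B d + B ! d) > 0) \<Longrightarrow> reduce_loop scale val x d B B"
| step: "val (lincomb scale \<alpha> B d + B ! d) > 0 \<Longrightarrow>
         reduce_loop scale val x d (B[d := scale (inverse x) (lincomb scale \<alpha> B d + B ! d)]) B' \<Longrightarrow>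
         reduce_loop scale val x d B B'"

inductive run_procedure ::
  "('k::field \<Rightarrow> 'v::ab_group_add \<Rightarrow> 'v) \<Rightarrow> ('v \<Rightarrow> int extended) \<Rightarrow> 'k \<Rightarrow> nat \<Rightarrow> 'v list \<Rightarrow> 'v list \<Rightarrow> bool"
  for scale val x where
  finish: "length B \<le> d \<Longrightarrow> run_procedure scale val x d B B"
| stage: "d < length B \<Longrightarrow>
          reduce_loop scale val x d (B[d := normalize scale val x (B ! d)]) B' \<Longrightarrow>
          run_procedure scale val x (Suc d) B' B'' \<Longrightarrow>
          run_procedure scale val x d B B''"

end

theory Submission imports Defs begin

lemma nu_fin: "valuation \<nu> \<Longrightarrow> a \<noteq> 0 \<Longrightarrow> \<exists>n. \<nu> a = Fin n"
  unfolding valuation_def by (cases "\<nu> a") auto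

lemma nu_one: assumes "valuation \<nu>" shows "\<nu> 1 = Fin 0"
proof -
  obtain n where n: "\<nu> 1 = Fin n" using nu_fin[OF assms, of 1] by auto
  have "\<nu> (1 * 1) = \<nu> 1 + \<nu> 1" using assms unfolding valuation_def by blast
  thus ?thesis using n by simp
qed

lemma nu_inv: assumes "valuation \<nu>" "a \<noteq> 0" "\<nu> a = Fin n" shows "\<nu> (inverse a) = Fin (- n)"
proof -
  obtain m where m: "\<nu> (inverse a) = Fin m" using nu_fin[OF assms(1), of "inverse a"] assms(2) by auto
  have "\<nu> (a * inverse a) = \<nu> a + \<nu> (inverse a)" using assms unfolding valuation_def by blast
  thus ?thesis using m assms nu_one[OF assms(1)] by simp
qed

lemma nu_pow: assumes "valuation \<nu>" "\<nu> x = Fin 1" shows "\<nu> (x ^ n) = Fin (int n)"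
proof (induction n)
  case 0 then show ?case using nu_one[OF assms(1)] by simp
next
  case (Suc n)
  have "\<nu> (x * x ^ n) = \<nu> x + \<nu> (x ^ n)" using assms unfolding valuation_def by blast
  then show ?case using Suc assms by simp
qed

lemma nu_x_nz: assumes "valuation \<nu>" "\<nu> x = Fin 1" shows "x \<noteq> 0"
  using assms unfolding valuation_def by (metis extended.distinct(1))

lemma nu_powi: assumes "valuation \<nu>" "\<nu> x = Fin 1" shows "\<nu> (x powi k) = Fin k"
proof (cases "k \<ge> 0")
  case True
  then show ?thesis using nu_pow[OF assms, of "nat k"] by (simp add: power_int_def)
next
  case False
  have nz: "x ^ nat (-k) \<noteq> 0" using nu_x_nz[OF assms] by simp
  have "\<nu> (inverse (x ^ nat (-k))) = Fin k"
    using nu_inv[OF assms(1) nz nu_pow[OF assms, of "nat (-k)"]] False by simp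
  then show ?thesis using False by (simp add: power_int_def power_inverse)
qed

lemma nu_neg1: assumes "valuation \<nu>" shows "\<nu> (-1) = Fin 0"
proof -
  obtain m where m: "\<nu> (-1) = Fin m" using nu_fin[OF assms, of "-1"] by auto
  have "\<nu> ((-1) * (-1)) = \<nu> (-1) + \<nu> (-1)" using assms unfolding valuation_def by blast
  thus ?thesis using m nu_one[OF assms] by simp
qed


lemma val_fin: "value_function scale \<nu> val \<Longrightarrow> v \<noteq> 0 \<Longrightarrow> \<exists>n. val v = Fin n"
  unfolding value_function_def by (cases "val v") auto

lemma val_zero: "value_function scale \<nu> val \<Longrightarrow> val 0 = Pinf"
  unfolding value_function_def by auto

lemma val_scale: "value_function scale \<nu> val \<Longrightarrow> val (scale a v) = \<nu> a + val v"
  unfolding value_function_def by auto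

lemma val_add: "value_function scale \<nu> val \<Longrightarrow> val (v + w) \<ge> min (val v) (val w)"
  unfolding value_function_def by auto

lemma val_neg: assumes VS: "vector_space scale" and "valuation \<nu>" "value_function scale \<nu> val" shows "val (- v) = val v"
proof -
  interpret vector_space scale by fact
  have "val (scale (-1) v) = \<nu> (-1) + val v" by (rule val_scale[OF assms(3)])
  moreover have "val v \<noteq> Minf" using assms(3) unfolding value_function_def by auto
  ultimately show ?thesis using nu_neg1[OF assms(2)] by (cases "val v") auto
qed

lemma val_diff: assumes VS: "vector_space scale" and "valuation \<nu>" "value_function scale \<nu> val" shows "val (v - w) \<ge> min (val v) (val w)"
  using val_add[OF assms(3), of v "-w"] val_neg[OF assms] by simp

lemma val_sum_nonneg: assumes "value_function scale \<nu> val" "finite A" "\<forall>i\<in>A. val (f i) \<ge> 0"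
  shows "val (sum f A) \<ge> 0"
  using assms(2,3)
proof (induction A rule: finite_induct)
  case empty then show ?case using val_zero[OF assms(1)] by simp
next
  case (insert a A)
  then show ?case using val_add[OF assms(1), of "f a" "sum f A"] by (simp add: min_def split: if_splits)
qed

lemma val_scale_nonneg: assumes "value_function scale \<nu> val" "valuation \<nu>" "\<nu> a \<ge> 0" "val v \<ge> 0"
  shows "val (scale a v) \<ge> 0"
proof -
  have "\<nu> a \<noteq> Minf" "val v \<noteq> Minf" using assms unfolding valuation_def value_function_def by auto
  thus ?thesis using assms(3,4) val_scale[OF assms(1)] by (cases "\<nu> a"; cases "val v") (auto simp: zero_extended_def)
qed

context vector_space begin

lemma lincomb_key:
  assumes "d < n" "length B = n"
  shows "lincomb scale a (B[d := scale c (lincomb scale \<alpha> B d + B!d)]) n =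
         lincomb scale (\<lambda>i. if i < d then a i + a d * c * \<alpha> i else if i = d then a d * c else a i) B n"
proof -
  let ?B2 = "B[d := scale c (lincomb scale \<alpha> B d + B!d)]"
  let ?T = "\<lambda>i. if i < d then a i + a d * c * \<alpha> i else if i = d then a d * c else a i"
  let ?L = "lincomb scale \<alpha> B d"
  let ?R = "{..<n} - {d}"
  have dn: "d \<in> {..<n}" using assms by simp
  have "lincomb scale a ?B2 n = scale (a d) (?B2 ! d) + (\<Sum>i\<in>?R. scale (a i) (?B2 ! i))"
    unfolding lincomb_def by (rule sum.remove[OF finite_lessThan dn])
  also have "\<dots> = scale (a d) (scale c (?L + B!d)) + (\<Sum>i\<in>?R. scale (a i) (B ! i))"
    using assms by (auto intro!: sum.cong)
  finally have L: "lincomb scale a ?B2 n = scale (a d * c) ?L + scale (a d * c) (B!d) + (\<Sum>i\<in>?R. scale (a i) (B ! i))"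
    by (simp add: scale_right_distrib)
  have "lincomb scale ?T B n = scale (?T d) (B ! d) + (\<Sum>i\<in>?R. scale (?T i) (B ! i))"
    unfolding lincomb_def by (rule sum.remove[OF finite_lessThan dn])
  also have "(\<Sum>i\<in>?R. scale (?T i) (B ! i)) = (\<Sum>i\<in>?R. scale (a i) (B ! i) + (if i < d then scale (a d * c) (scale (\<alpha> i) (B!i)) else 0))"
    by (intro sum.cong) (auto simp: scale_left_distrib)
  also have "\<dots> = (\<Sum>i\<in>?R. scale (a i) (B ! i)) + (\<Sum>i\<in>?R. (if i < d then scale (a d * c) (scale (\<alpha> i) (B!i)) else 0))"
    by (simp add: sum.distrib)
  also have "(\<Sum>i\<in>?R. (if i < d then scale (a d * c) (scale (\<alpha> i) (B!i)) else 0)) = (\<Sum>i\<in>?R \<inter> {..<d}. scale (a d * c) (scale (\<alpha> i) (B!i)))"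
    by (subst sum.inter_restrict) (auto intro!: sum.cong)
  also have "?R \<inter> {..<d} = {..<d}" using assms by auto
  also have "(\<Sum>i<d. scale (a d * c) (scale (\<alpha> i) (B!i))) = scale (a d * c) ?L"
    by (simp add: lincomb_def scale_sum_right)
  finally show ?thesis using L by (simp add: algebra_simps)
qed

lemma basis_update:
  assumes "is_k_basis scale B" "d < length B" "c \<noteq> 0"
  shows "is_k_basis scale (B[d := scale c (lincomb scale \<alpha> B d + B!d)])"
proof -
  let ?n = "length B"
  let ?B2 = "B[d := scale c (lincomb scale \<alpha> B d + B!d)]"
  define T where "T a = (\<lambda>i. if i < d then a i + a d * c * \<alpha> i else if i = d then a d * c else a i)" for a
  have key: "lincomb scale a ?B2 ?n = lincomb scale (T a) B ?n" for a
    unfolding T_def using lincomb_key[OF assms(2) refl] .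
  have len: "length ?B2 = ?n" by simp
  show ?thesis unfolding is_k_basis_def len
  proof (intro conjI allI impI)
    fix a i assume z: "lincomb scale a ?B2 ?n = 0" and i: "i < ?n"
    have T0: "\<forall>j<?n. T a j = 0" using z key assms(1) unfolding is_k_basis_def by metis
    have "a d * c = 0" using T0 assms(2) unfolding T_def by auto
    hence ad: "a d = 0" using assms(3) by simp
    show "a i = 0" using T0[rule_format, OF i] ad unfolding T_def by (auto split: if_splits)
  next
    fix v
    obtain b where b: "v = lincomb scale b B ?n" using assms(1) unfolding is_k_basis_def by blast
    define a where "a = (\<lambda>i. if i < d then b i - (b d / c) * c * \<alpha> i else if i = d then b d / c else b i)"
    have "T a = b" unfolding T_def a_def using assms(3) by (auto simp: fun_eq_iff)
    thus "\<exists>a. v = lincomb scale a ?B2 ?n" using b key by metis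
  qed
qed

end

lemma basis_nz:
  fixes scale :: "'k::field_char_0 \<Rightarrow> 'v::ab_group_add \<Rightarrow> 'v"
  assumes VS: "vector_space scale" and b: "is_k_basis scale B" and d: "d < length B"
  shows "B ! d \<noteq> 0"
proof
  assume z: "B ! d = 0"
  interpret vector_space scale by fact
  let ?a = "\<lambda>i. if i = d then (1::'k) else 0"
  have "lincomb scale ?a B (length B) = (\<Sum>i<length B. if i = d then B ! i else 0)"
    unfolding lincomb_def by (intro sum.cong) auto
  also have "\<dots> = 0" using z d by simp
  finally have "?a d = 0" using b d unfolding is_k_basis_def by blast
  thus False by simp
qed

lemma reduce_inv:
  fixes scale :: "'k::field_char_0 \<Rightarrow> 'v::ab_group_add \<Rightarrow> 'v"
  assumes VS: "vector_space scale" and VN: "valuation \<nu>" and VF: "value_function scale \<nu> val" and x: "\<nu> x = 1"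
  shows "reduce_loop scale val x d B B' \<Longrightarrow> d < length B \<Longrightarrow> val (B!d) \<ge> 0 \<Longrightarrow> is_k_basis scale B \<Longrightarrow>
     length B' = length B \<and> (\<forall>i. i \<noteq> d \<longrightarrow> B'!i = B!i) \<and> \<not>(\<exists>\<alpha>. val (lincomb scale \<alpha> B' d + B'!d) > 0) \<and> val (B'!d) \<ge> 0 \<and> is_k_basis scale B'"
proof (induction rule: reduce_loop.induct)
  case (stop B) then show ?case by auto
next
  case (step \<alpha> B d B')
  let ?u = "lincomb scale \<alpha> B d + B ! d"
  let ?B1 = "B[d := scale (inverse x) ?u]"
  have x1: "\<nu> x = Fin 1" using x by (simp add: one_extended_def)
  have xnz: "x \<noteq> 0" using nu_x_nz[OF VN x1] .
  have ix: "\<nu> (inverse x) = Fin (-1)" using nu_inv[OF VN xnz x1] by simp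
  have "val ?u \<noteq> Minf" using VF unfolding value_function_def by auto
  hence v1: "val (?B1 ! d) \<ge> 0" using step.hyps(1) step.prems(1) val_scale[OF VF, of "inverse x" ?u] ix
    by (cases "val ?u") (auto simp: zero_extended_def)
  have b1: "is_k_basis scale ?B1" using vector_space.basis_update[OF VS step.prems(3) step.prems(1)] xnz by simp
  have l1: "d < length ?B1" using step.prems(1) by simp
  from step.IH[OF l1 v1 b1] step.prems(1) show ?case by auto
qed

lemma run_inv:
  fixes scale :: "'k::field_char_0 \<Rightarrow> 'v::ab_group_add \<Rightarrow> 'v"
  assumes VS: "vector_space scale" and VN: "valuation \<nu>" and VF: "value_function scale \<nu> val" and x: "\<nu> x = 1"
  shows "run_procedure scale val x d B B' \<Longrightarrow> is_k_basis scale B \<Longrightarrow>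
   length B' = length B \<and> (\<forall>i<d. B'!i = B!i) \<and>
   (\<forall>i. d \<le> i \<and> i < length B \<longrightarrow> \<not>(\<exists>\<alpha>. val (lincomb scale \<alpha> B' i + B'!i) > 0) \<and> val (B'!i) \<ge> 0) \<and> is_k_basis scale B'"
proof (induction rule: run_procedure.induct)
  case (finish B d) then show ?case by auto
next
  case (stage d B B' B'')
  interpret vector_space scale by fact
  let ?B1 = "B[d := normalize scale val x (B ! d)]"
  have x1: "\<nu> x = Fin 1" using x by (simp add: one_extended_def)
  have xnz: "x \<noteq> 0" using nu_x_nz[OF VN x1] .
  have bd: "B ! d \<noteq> 0" using basis_nz[OF VS stage.prems stage.hyps(1)] .
  obtain n where n: "val (B ! d) = Fin n" using val_fin[OF VF bd] by auto
  have nd: "normalize scale val x (B ! d) = scale (x powi (-n)) (B ! d)"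
    unfolding normalize_def n by simp
  have "val (normalize scale val x (B ! d)) = Fin 0"
    unfolding nd val_scale[OF VF] n nu_powi[OF VN x1] by simp
  hence v1: "val (?B1 ! d) \<ge> 0" using stage.hyps(1) by (simp add: zero_extended_def)
  have l0: "lincomb scale (\<lambda>_. 0) B d = 0" unfolding lincomb_def by simp
  have "is_k_basis scale (B[d := scale (x powi (-n)) (lincomb scale (\<lambda>_. 0) B d + B!d)])"
    by (rule basis_update[OF stage.prems stage.hyps(1)]) (use xnz in simp)
  hence b1: "is_k_basis scale ?B1" unfolding l0 nd by simp
  have l1: "d < length ?B1" using stage.hyps(1) by simp
  note R = reduce_inv[OF VS VN VF x stage.hyps(2) l1 v1 b1]
  note IH = stage.IH[OF conjunct2[OF conjunct2[OF conjunct2[OF conjunct2[OF R]]]]]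
  have lenB': "length B' = length B" using R by simp
  have same: "B'' ! j = B' ! j" if "j \<le> d" for j using IH that by auto
  have "lincomb scale \<alpha> B'' d = lincomb scale \<alpha> B' d" for \<alpha>
    unfolding lincomb_def using same by (intro sum.cong) auto
  hence stopd: "\<not>(\<exists>\<alpha>. val (lincomb scale \<alpha> B'' d + B''!d) > 0)" "val (B''!d) \<ge> 0"
    using R same[of d] by auto
  show ?case
  proof (intro conjI allI impI)
    show "length B'' = length B" using IH lenB' by simp
  next
    fix i assume "i < d"
    thus "B'' ! i = B ! i" using IH R by auto
  next
    fix i assume i: "d \<le> i \<and> i < length B"
    show "\<not>(\<exists>\<alpha>. val (lincomb scale \<alpha> B'' i + B''!i) > 0)"
    proof (cases "i = d")
      case True then show ?thesis using stopd by simp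
    next
      case False then show ?thesis using IH i lenB' by auto
    qed
    show "val (B''!i) \<ge> 0"
    proof (cases "i = d")
      case True then show ?thesis using stopd by simp
    next
      case False then show ?thesis using IH i lenB' by auto
    qed
  next
    show "is_k_basis scale B''" using IH by simp
  qed
qed

theorem mainTheorem2:
  fixes \<nu> :: "'k::field_char_0 \<Rightarrow> int extended"
    and scale :: "'k \<Rightarrow> 'v::ab_group_add \<Rightarrow> 'v"
    and val :: "'v \<Rightarrow> int extended"
    and x :: 'k and r :: nat and B B' :: "'v list"
  assumes "vector_space scale"
    and "valuation \<nu>"
    and "value_function scale \<nu> val"
    and "vector_space.dim scale (UNIV :: 'v set) = r"
    and "\<nu> x = 1"
    and "length B = r"
    and "is_k_basis scale B"
    and "run_procedure scale val x 0 B B'"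
  shows "length B' = r \<and> is_k_basis scale B' \<and> local_integral_basis scale \<nu> val B'"
proof -
  note VS = assms(1) and VN = assms(2) and VF = assms(3)
  interpret vector_space scale by fact
  note R = run_inv[OF VS VN VF assms(5) assms(8) assms(7)]
  have len: "length B' = r" using R assms(6) by simp
  have bas: "is_k_basis scale B'" using R by simp
  have stop: "\<not>(\<exists>\<alpha>. val (lincomb scale \<alpha> B' i + B'!i) > 0)" "val (B'!i) \<ge> 0" if "i < r" for i
    using R that assms(6) by auto
  have span: "\<forall>i<r. \<nu> (a i) \<ge> 0" if v: "val v \<ge> 0" "v = lincomb scale a B' r" for v a
  proof (rule ccontr)
    assume "\<not> (\<forall>i<r. \<nu> (a i) \<ge> 0)"
    define S where "S = {i. i < r \<and> \<not> \<nu> (a i) \<ge> 0}"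
    have Sne: "S \<noteq> {}" "finite S" using \<open>\<not> (\<forall>i<r. \<nu> (a i) \<ge> 0)\<close> unfolding S_def by auto
    define d where "d = Max S"
    have dS: "d \<in> S" using Sne unfolding d_def by simp
    hence dr: "d < r" and nd: "\<not> \<nu> (a d) \<ge> 0" unfolding S_def by auto
    have above: "\<nu> (a i) \<ge> 0" if "d < i" "i < r" for i
    proof (rule ccontr)
      assume "\<not> \<nu> (a i) \<ge> 0"
      hence "i \<in> S" using that unfolding S_def by auto
      hence "i \<le> d" using Sne unfolding d_def by simp
      thus False using that by simp
    qed
    have adnz: "a d \<noteq> 0" using nd VN unfolding valuation_def by (metis le_Pinf)
    obtain m where m: "\<nu> (a d) = Fin m" using nu_fin[OF VN adnz] by auto
    have mneg: "m < 0" using nd m by (simp add: zero_extended_def)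
    define tail where "tail = (\<Sum>i\<in>{Suc d..<r}. scale (a i) (B' ! i))"
    have vt: "val tail \<ge> 0" unfolding tail_def
      by (rule val_sum_nonneg[OF VF]) (auto intro!: val_scale_nonneg[OF VF VN] above stop(2))
    have split: "{..<r} = {..<Suc d} \<union> {Suc d..<r}" using dr by auto
    have "lincomb scale a B' r = lincomb scale a B' (Suc d) + tail"
      unfolding lincomb_def tail_def split by (rule sum.union_disjoint) auto
    hence w: "lincomb scale a B' (Suc d) = v - tail" using v(2) by (simp add: algebra_simps)
    have vw: "val (lincomb scale a B' (Suc d)) \<ge> 0"
      unfolding w using val_diff[OF VS VN VF, of v tail] v(1) vt by (simp add: min_def split: if_splits)
    have "scale (inverse (a d)) (lincomb scale a B' (Suc d))
        = lincomb scale (\<lambda>i. inverse (a d) * a i) B' d + B' ! d"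
      using adnz by (simp add: lincomb_def scale_right_distrib scale_sum_right)
    moreover have "val (scale (inverse (a d)) (lincomb scale a B' (Suc d))) > 0"
    proof -
      have "val (lincomb scale a B' (Suc d)) \<noteq> Minf" using VF unfolding value_function_def by auto
      thus ?thesis using vw mneg unfolding val_scale[OF VF] nu_inv[OF VN adnz m]
        by (cases "val (lincomb scale a B' (Suc d))") (auto simp: zero_extended_def)
    qed
    ultimately show False using stop(1)[OF dr] by metis
  qed
  have lib: "local_integral_basis scale \<nu> val B'"
    unfolding local_integral_basis_def len
  proof (intro conjI allI impI)
    fix i assume "i < r" thus "val (B' ! i) \<ge> 0" using stop(2) by simp
  next
    fix v assume v: "val v \<ge> 0"
    obtain a where a: "v = lincomb scale a B' r" using bas len unfolding is_k_basis_def by blast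
    show "\<exists>a. (\<forall>i<r. \<nu> (a i) \<ge> 0) \<and> v = lincomb scale a B' r"
      using span[OF v a] a by blast
  next
    fix a i assume "(\<forall>i<r. \<nu> (a i) \<ge> 0) \<and> lincomb scale a B' r = 0" "i < r"
    thus "a i = 0" using bas len unfolding is_k_basis_def by blast
  qed
  show ?thesis using len bas lib by simp
qed

end
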